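(* Let $G=(V,E)$ be a graph, $v\in V$, and $S_v$ the partial star product of $v$. Then: (1) if $e,f\in E_v$ and $(e,f)\in\mathfrak d_v^*$, there is no square in $S_v$ spanned by $e$ and $f$; (2) every square ($4$-cycle) in $S_v$ contains two edges of $E_v$ and two edges of $F_v$, and every edge $f\in F_v$ is the opposite edge of some primal edge $e\in E_v$ in a chordless square of $S_v$; (3) every non-primal vertex of $S_v$ is the unique top vertex of some square spanned by two edges $e,e'\in E_v$ (i.e. a top vertex $x$ of a square $v,u,x,w$ such that $u,w$ are the only common neighbours of $v$ and $x$).
   Context: All graphs are finite, simple and undirected. For a graph $G=(V,E)$ and $v\in V$, $E_v$ denotes the set of edges incident to $v$. For two distinct adjacent edges $e=(v,u)$, $f=(v,w)$, a square spanned by $e$ and $f$ is a $4$-cycle $v,u,x,w,v$ with $x\notin\{v,u,w\}$; $x$ is its top vertex. The square is chordless if neither $(u,w)$ nor $(v,x)$ is an edge of $G$. In a chordless square $v,u,x,w$, $(x,w)$ is the opposite edge of $(v,u)$ and $(x,u)$ is the opposite edge of $(v,w)$ (and vice versa). The relation $\delta(G)\subseteq E\times E$: $(e,f)\in\delta(G)$ iff (i) $e,f$ are distinct adjacent edges and it is not the case that $e$ and $f$ span exactly one square and that square is chordless; or (ii) $e,f$ are opposite edges of a chordless square; or (iii) $e=f$. Define $\mathfrak d_v=((E_v\times E)\cup(E\times E_v))\cap\delta(G)$ and $\mathfrak d_v^*$ the finest equivalence relation on $E$ containing $\mathfrak d_v$. Let $F_v\subseteq E\setminus E_v$ be the set of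 edges that are the edges not incident to $v$ of some chordless square spanned by two edges $e,e'\in E_v$ with $(e,e')\notin\mathfrak d_v^*$. The partial star product $S_v$ is the subgraph of $G$ with edge set $E_v\cup F_v$ and vertex set the endpoints of these edges; neighbours of $v$ are primal vertices, and the other vertices of $S_v$ distinct from $v$ are non-primal vertices. *)

theory Defs
  imports Main
begin

definition graph :: "'a set \<Rightarrow> 'a set set \<Rightarrow> bool" where
  "graph V E \<longleftrightarrow> finite V \<and>
     (\<forall>e\<in>E. \<exists>u w. e = {u, w} \<and> u \<noteq> w \<and> u \<in> V \<and> w \<in> V)"

definition incid :: "'a set set \<Rightarrow> 'a \<Rightarrow> 'a set set" where
  "incid E v = {e \<in> E. v \<in> e}"

definition sq :: "'a set set \<Rightarrow> 'a \<Rightarrow> 'a \<Rightarrow> 'a \<Rightarrow> 'a \<Rightarrow> bool" where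
  "sq E a b c d \<longleftrightarrow> distinct [a, b, c, d] \<and>
     {a, b} \<in> E \<and> {b, c} \<in> E \<and> {c, d} \<in> E \<and> {d, a} \<in> E"

definition chordless_sq :: "'a set set \<Rightarrow> 'a \<Rightarrow> 'a \<Rightarrow> 'a \<Rightarrow> 'a \<Rightarrow> bool" where
  "chordless_sq E a b c d \<longleftrightarrow> sq E a b c d \<and> {a, c} \<notin> E \<and> {b, d} \<notin> E"

definition tops :: "'a set set \<Rightarrow> 'a set \<Rightarrow> 'a set \<Rightarrow> 'a set" where
  "tops E e f = {x. \<exists>v u w. e = {v, u} \<and> f = {v, w} \<and> sq E v u x w}"

definition unique_chordless :: "'a set set \<Rightarrow> 'a set \<Rightarrow> 'a set \<Rightarrow> bool" where
  "unique_chordless E e f \<longleftrightarrow> (\<exists>x. tops E e f = {x} \<and>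
     (\<exists>v u w. e = {v, u} \<and> f = {v, w} \<and> chordless_sq E v u x w))"

definition opposite :: "'a set set \<Rightarrow> 'a set \<Rightarrow> 'a set \<Rightarrow> bool" where
  "opposite E e f \<longleftrightarrow> (\<exists>a b c d. chordless_sq E a b c d \<and> e = {a, b} \<and> f = {c, d})"

definition delta :: "'a set set \<Rightarrow> ('a set \<times> 'a set) set" where
  "delta E = {(e, f). e \<in> E \<and> f \<in> E \<and>
     ((e \<noteq> f \<and> e \<inter> f \<noteq> {} \<and> \<not> unique_chordless E e f) \<or> opposite E e f \<or> e = f)}"

definition dv :: "'a set set \<Rightarrow> 'a \<Rightarrow> ('a set \<times> 'a set) set" where
  "dv E v = ((incid E v \<times> E) \<union> (E \<times> incid E v)) \<inter> delta E"

definition dvstar :: "'a set set \<Rightarrow> 'a \<Rightarrow> ('a set \<times> 'a set) set" where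
  "dvstar E v = \<Inter> {R. equiv E R \<and> dv E v \<subseteq> R}"

definition Fv :: "'a set set \<Rightarrow> 'a \<Rightarrow> 'a set set" where
  "Fv E v = {f \<in> E - incid E v. \<exists>u x w. chordless_sq E v u x w \<and>
      ({v, u}, {v, w}) \<notin> dvstar E v \<and> (f = {u, x} \<or> f = {x, w})}"

definition Sv_edges :: "'a set set \<Rightarrow> 'a \<Rightarrow> 'a set set" where
  "Sv_edges E v = incid E v \<union> Fv E v"

definition Sv_verts :: "'a set set \<Rightarrow> 'a \<Rightarrow> 'a set" where
  "Sv_verts E v = \<Union> (Sv_edges E v)"

end

theory Submission
  imports Defs
begin

lemma dvstar_sym: "(a,b) \<in> dvstar E v \<Longrightarrow> (b,a) \<in> dvstar E v"
  unfolding dvstar_def equiv_def by (auto dest: symD)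

lemma dvstar_trans: "(a,b) \<in> dvstar E v \<Longrightarrow> (b,c) \<in> dvstar E v \<Longrightarrow> (a,c) \<in> dvstar E v"
  unfolding dvstar_def equiv_def by (auto dest: transD)

lemma dv_in: assumes "(e,f) \<in> delta E" "v \<in> e" "e \<in> E" shows "(e,f) \<in> dvstar E v"
proof -
  have "(e,f) \<in> dv E v" using assms by (auto simp: dv_def incid_def delta_def)
  thus ?thesis unfolding dvstar_def by blast
qed

lemma edge_neq: "graph V E \<Longrightarrow> {a,b} \<in> E \<Longrightarrow> a \<noteq> b"
  unfolding graph_def by (force simp: doubleton_eq_iff)

lemma chordless_sq_rev: "chordless_sq E a b c d \<Longrightarrow> chordless_sq E a d c b"
  by (auto simp: chordless_sq_def sq_def insert_commute)

lemma sq_rot: "sq E a b c d \<Longrightarrow> sq E b c d a"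
  by (auto simp: sq_def insert_commute)

lemma FvD: assumes "f \<in> Fv E v"
  shows "\<exists>u x w. chordless_sq E v u x w \<and> ({v,u},{v,w}) \<notin> dvstar E v \<and> f = {u,x}"
proof -
  from assms obtain u x w where c: "chordless_sq E v u x w" and n: "({v,u},{v,w}) \<notin> dvstar E v"
    and f: "f = {u,x} \<or> f = {x,w}"
    unfolding Fv_def by blast
  show ?thesis
  proof (cases "f = {u,x}")
    case True thus ?thesis using c n by blast
  next
    case False
    hence "f = {w,x}" using f by (auto simp: insert_commute)
    moreover have "chordless_sq E v w x u" using chordless_sq_rev[OF c] .
    moreover have "({v,w},{v,u}) \<notin> dvstar E v"
    proof
      assume "({v,w},{v,u}) \<in> dvstar E v"
      from dvstar_sym[OF this] n show False by simp
    qed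
    ultimately show ?thesis by blast
  qed
qed

lemma FvP: assumes "f \<in> Fv E v"
  shows "\<exists>p q. f = {p,q} \<and> {v,p} \<in> E \<and> {v,q} \<notin> E"
proof -
  obtain u x w where c: "chordless_sq E v u x w" and f: "f = {u,x}" using FvD[OF assms] by blast
  thus ?thesis unfolding chordless_sq_def sq_def by auto
qed

lemma Fv_in: "f \<in> Fv E v \<Longrightarrow> f \<in> E \<and> v \<notin> f"
  by (auto simp: Fv_def incid_def)

lemma S_E: "e \<in> Sv_edges E v \<Longrightarrow> e \<in> E"
  unfolding Sv_edges_def incid_def Fv_def by blast

lemma S_notinc: "e \<in> Sv_edges E v \<Longrightarrow> v \<notin> e \<Longrightarrow> e \<in> Fv E v"
  by (auto simp: Sv_edges_def incid_def)

lemma keyL: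
  assumes g: "graph V E" and c: "chordless_sq E v u x w" and n: "({v,u},{v,w}) \<notin> dvstar E v"
    and y1: "{v,y} \<in> E" and y2: "{x,y} \<in> E"
  shows "y = u \<or> y = w"
proof (rule ccontr)
  assume ny: "\<not> (y = u \<or> y = w)"
  have yv: "y \<noteq> v" using edge_neq[OF g y1] by auto
  have yx: "y \<noteq> x" using edge_neq[OF g y2] by auto
  from c have d: "distinct [v,u,x,w]" and E: "{v,u}\<in>E" "{u,x}\<in>E" "{x,w}\<in>E" "{w,v}\<in>E"
    and nc: "{v,x}\<notin>E" "{u,w}\<notin>E"
    unfolding chordless_sq_def sq_def by auto
  have t1: "w \<in> tops E {v,u} {u,x}" unfolding tops_def sq_def
    apply (rule CollectI) apply (rule exI[of _ u], rule exI[of _ v], rule exI[of _ x])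
    using d E by (auto simp: insert_commute)
  have t2: "y \<in> tops E {v,u} {u,x}" unfolding tops_def sq_def
    apply (rule CollectI) apply (rule exI[of _ u], rule exI[of _ v], rule exI[of _ x])
    using d E ny yv yx y1 y2 by (auto simp: insert_commute)
  have "\<not> unique_chordless E {v,u} {u,x}" using t1 t2 ny unfolding unique_chordless_def by auto
  moreover have "{v,u} \<noteq> {u,x}" using d by (auto simp: doubleton_eq_iff)
  ultimately have "({v,u},{u,x}) \<in> delta E" unfolding delta_def using E by auto
  hence 1: "({v,u},{u,x}) \<in> dvstar E v" using dv_in[OF _ _ E(1)] by simp
  have "opposite E {v,w} {u,x}" unfolding opposite_def
    apply (rule exI[of _ v], rule exI[of _ w], rule exI[of _ x], rule exI[of _ u])
    using chordless_sq_rev[OF c] by (auto simp: insert_commute)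
  hence "({v,w},{u,x}) \<in> delta E" unfolding delta_def using E by (auto simp: insert_commute)
  moreover have Evw: "{v,w} \<in> E" using E(4) by (simp add: insert_commute)
  ultimately have 2: "({v,w},{u,x}) \<in> dvstar E v" using dv_in[OF _ _ Evw] by simp
  from 1 dvstar_sym[OF 2] have "({v,u},{v,w}) \<in> dvstar E v" by (rule dvstar_trans)
  with n show False by (rule notE)
qed

lemma uniqT: assumes "{v,a} \<in> E" "{v,c} \<in> E" "({v,a},{v,c}) \<notin> dvstar E v"
  "b \<in> tops E {v,a} {v,c}" "d \<in> tops E {v,a} {v,c}"
  shows "b = d"
proof -
  have nd: "({v,a},{v,c}) \<notin> delta E"
  proof
    assume "({v,a},{v,c}) \<in> delta E"
    from dv_in[OF this _ assms(1)] assms(3) show False by simp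
  qed
  have ne: "{v,a} \<noteq> {v,c}"
  proof
    assume eq: "{v,a} = {v,c}"
    have "({v,a},{v,c}) \<in> delta E" unfolding delta_def using assms(1,2) eq by simp
    with nd show False by (rule notE)
  qed
  have int: "{v,a} \<inter> {v,c} \<noteq> {}" by blast
  have "unique_chordless E {v,a} {v,c}"
  proof (rule ccontr)
    assume "\<not> unique_chordless E {v,a} {v,c}"
    hence "({v,a},{v,c}) \<in> delta E" unfolding delta_def using assms(1,2) ne int by simp
    with nd show False by (rule notE)
  qed
  then obtain x0 where "tops E {v,a} {v,c} = {x0}" unfolding unique_chordless_def by auto
  thus ?thesis using assms(4,5) by auto
qed

lemma sqS: assumes c: "chordless_sq E v u x w" and n: "({v,u},{v,w}) \<notin> dvstar E v"
  shows "chordless_sq (Sv_edges E v) v u x w"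
proof -
  from c have d: "distinct [v,u,x,w]" and E: "{v,u}\<in>E" "{u,x}\<in>E" "{x,w}\<in>E" "{w,v}\<in>E"
    and nc: "{v,x}\<notin>E" "{u,w}\<notin>E"
    unfolding chordless_sq_def sq_def by auto
  have 1: "{u,x} \<in> Fv E v" unfolding Fv_def incid_def using c n d E by auto
  have 2: "{x,w} \<in> Fv E v" unfolding Fv_def incid_def using c n d E by auto
  have 3: "{v,u} \<in> incid E v" "{w,v} \<in> incid E v" using E by (auto simp: incid_def)
  show ?thesis unfolding chordless_sq_def sq_def using d 1 2 3 nc S_E[of _ E v]
    by (auto simp: Sv_edges_def)
qed

lemma noV: assumes g: "graph V E" and s: "sq (Sv_edges E v) a b c d" and nv: "v \<notin> {a,b,c,d}"
  and va: "{v,a} \<in> E"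
  shows False
proof -
  from s have d: "distinct [a,b,c,d]" and S: "{a,b} \<in> Sv_edges E v" "{b,c} \<in> Sv_edges E v"
    "{c,d} \<in> Sv_edges E v" "{d,a} \<in> Sv_edges E v" unfolding sq_def by auto
  have F: "{a,b} \<in> Fv E v" "{b,c} \<in> Fv E v" "{c,d} \<in> Fv E v" "{d,a}\<in>Fv E v"
    using S_notinc[OF S(1)] S_notinc[OF S(2)] S_notinc[OF S(3)] S_notinc[OF S(4)] nv by auto
  have SE: "{a,b} \<in> E" "{b,c} \<in> E" "{c,d} \<in> E" "{d,a}\<in>E" using Fv_in[OF F(1)] Fv_in[OF F(2)] Fv_in[OF F(3)] Fv_in[OF F(4)] by auto
  obtain u x w where c: "chordless_sq E v u x w" and n: "({v,u},{v,w}) \<notin> dvstar E v"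
    and eq: "{a,b} = {u,x}" using FvD[OF F(1)] by blast
  have nvx: "{v,x} \<notin> E" using c unfolding chordless_sq_def by auto
  have ab: "a = u \<and> b = x" using eq va nvx by (auto simp: doubleton_eq_iff)
  obtain p q where pq: "{b,c} = {p,q}" "{v,p} \<in> E" "{v,q} \<notin> E" using FvP[OF F(2)] by blast
  have vc: "{v,c} \<in> E" using pq ab nvx by (auto simp: doubleton_eq_iff)
  have "c = u \<or> c = w" using keyL[OF g c n vc] SE ab by auto
  hence cw: "c = w" using ab d by auto
  have t1: "b \<in> tops E {v,a} {v,c}" unfolding tops_def using c ab cw
    unfolding chordless_sq_def by auto
  have t2: "d \<in> tops E {v,a} {v,c}" unfolding tops_def sq_def
    apply (rule CollectI) apply (rule exI[of _ v], rule exI[of _ a], rule exI[of _ c])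
    using d SE nv va vc by (auto simp: insert_commute)
  have "b = d" using uniqT[OF va vc _ t1 t2] n ab cw by auto
  thus False using d by auto
qed

lemma vA: assumes s: "sq (Sv_edges E v) v b c d"
  shows "card ({{v,b},{b,c},{c,d},{d,v}} \<inter> incid E v) = 2 \<and>
         card ({{v,b},{b,c},{c,d},{d,v}} \<inter> Fv E v) = 2"
proof -
  from s have d: "distinct [v,b,c,d]" and S: "{v,b} \<in> Sv_edges E v" "{b,c} \<in> Sv_edges E v"
    "{c,d} \<in> Sv_edges E v" "{d,v} \<in> Sv_edges E v" unfolding sq_def by auto
  have SE: "{v,b} \<in> E" "{d,v} \<in> E" using S_E[OF S(1)] S_E[OF S(4)] by auto
  have F: "{b,c} \<in> Fv E v" "{c,d} \<in> Fv E v" using S_notinc[OF S(2)] S_notinc[OF S(3)] d by auto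
  have 1: "{{v,b},{b,c},{c,d},{d,v}} \<inter> incid E v = {{v,b},{d,v}}"
    using d SE by (auto simp: incid_def)
  have 2: "{{v,b},{b,c},{c,d},{d,v}} \<inter> Fv E v = {{b,c},{c,d}}"
    using F Fv_in[of "{v,b}" E v] Fv_in[of "{d,v}" E v] by blast
  have "{v,b} \<noteq> {d,v}" "{b,c} \<noteq> {c,d}" using d by (auto simp: doubleton_eq_iff)
  thus ?thesis using 1 2 by simp
qed

theorem corollary3p3:
  fixes V :: "'a set" and E :: "'a set set" and v :: 'a
  assumes "graph V E" and "v \<in> V"
  shows "(\<forall>e\<in>incid E v. \<forall>f\<in>incid E v. (e, f) \<in> dvstar E v \<longrightarrow>
            \<not> (\<exists>u x w. e = {v, u} \<and> f = {v, w} \<and> sq (Sv_edges E v) v u x w))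
       \<and> (\<forall>a b c d. sq (Sv_edges E v) a b c d \<longrightarrow>
            card ({{a, b}, {b, c}, {c, d}, {d, a}} \<inter> incid E v) = 2 \<and>
            card ({{a, b}, {b, c}, {c, d}, {d, a}} \<inter> Fv E v) = 2)
       \<and> (\<forall>f\<in>Fv E v. \<exists>e\<in>incid E v. opposite (Sv_edges E v) e f)
       \<and> (\<forall>x\<in>Sv_verts E v. x \<noteq> v \<and> {v, x} \<notin> E \<longrightarrow>
            (\<exists>u w. sq (Sv_edges E v) v u x w \<and>
                   {y. {v, y} \<in> E \<and> {x, y} \<in> E} = {u, w}))"
proof (intro conjI)
  note g = assms(1)
  have P1: "\<not> sq (Sv_edges E v) v u x w" if dd: "({v,u},{v,w}) \<in> dvstar E v" for u x w
  proof
    assume s: "sq (Sv_edges E v) v u x w"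
    hence d: "distinct [v,u,x,w]" and S: "{u,x} \<in> Sv_edges E v" "{x,w} \<in> Sv_edges E v"
      "{v,u} \<in> Sv_edges E v" "{w,v} \<in> Sv_edges E v" unfolding sq_def by auto
    have SE: "{u,x} \<in> E" "{x,w} \<in> E" "{v,u} \<in> E" "{v,w} \<in> E" using S_E[OF S(1)] S_E[OF S(2)] S_E[OF S(3)] S_E[OF S(4)]
      by (auto simp: insert_commute)
    have "{u,x} \<in> Fv E v" using S_notinc[OF S(1)] d by auto
    from FvD[OF this] obtain u' x' w' where c: "chordless_sq E v u' x' w'" and n: "({v,u'},{v,w'}) \<notin> dvstar E v"
      and eq: "{u,x} = {u',x'}" by blast
    have nvx: "{v,x'} \<notin> E" using c unfolding chordless_sq_def by auto
    have "(u=u' \<and> x=x') \<or> (u=x' \<and> x=u')" using eq by (simp add: doubleton_eq_iff)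
    moreover have "u \<noteq> x'" using SE(3) nvx by auto
    ultimately have ux: "u = u' \<and> x = x'" by blast
    have "w = u' \<or> w = w'" using keyL[OF g c n SE(4)] SE ux by (auto simp: insert_commute)
    hence "w = w'" using ux d by auto
    thus False using n dd ux by simp
  qed
  show "\<forall>e\<in>incid E v. \<forall>f\<in>incid E v. (e, f) \<in> dvstar E v \<longrightarrow>
            \<not> (\<exists>u x w. e = {v, u} \<and> f = {v, w} \<and> sq (Sv_edges E v) v u x w)"
    using P1 by blast
  show "\<forall>a b c d. sq (Sv_edges E v) a b c d \<longrightarrow>
            card ({{a, b}, {b, c}, {c, d}, {d, a}} \<inter> incid E v) = 2 \<and>
            card ({{a, b}, {b, c}, {c, d}, {d, a}} \<inter> Fv E v) = 2"
  proof (intro allI impI)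
    fix a b c d assume s: "sq (Sv_edges E v) a b c d"
    have r1: "sq (Sv_edges E v) b c d a" using sq_rot[OF s] .
    have r2: "sq (Sv_edges E v) c d a b" using sq_rot[OF r1] .
    have r3: "sq (Sv_edges E v) d a b c" using sq_rot[OF r2] .
    consider "v = a" | "v = b" | "v = c" | "v = d" | "v \<notin> {a,b,c,d}" by auto
    thus "card ({{a, b}, {b, c}, {c, d}, {d, a}} \<inter> incid E v) = 2 \<and>
            card ({{a, b}, {b, c}, {c, d}, {d, a}} \<inter> Fv E v) = 2"
    proof cases
      case 1
      have X: "{{a,b},{b,c},{c,d},{d,a}} = {{v,b},{b,c},{c,d},{d,v}}" using 1 by blast
      have "sq (Sv_edges E v) v b c d" using s 1 by simp
      from vA[OF this] show ?thesis unfolding X .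
    next
      case 2
      have X: "{{a,b},{b,c},{c,d},{d,a}} = {{v,c},{c,d},{d,a},{a,v}}" using 2 by blast
      have "sq (Sv_edges E v) v c d a" using r1 2 by simp
      from vA[OF this] show ?thesis unfolding X .
    next
      case 3
      have X: "{{a,b},{b,c},{c,d},{d,a}} = {{v,d},{d,a},{a,b},{b,v}}" using 3 by blast
      have "sq (Sv_edges E v) v d a b" using r2 3 by simp
      from vA[OF this] show ?thesis unfolding X .
    next
      case 4
      have X: "{{a,b},{b,c},{c,d},{d,a}} = {{v,a},{a,b},{b,c},{c,v}}" using 4 by blast
      have "sq (Sv_edges E v) v a b c" using r3 4 by simp
      from vA[OF this] show ?thesis unfolding X .
    next
      case 5
      have "{a,b} \<in> Sv_edges E v" using s unfolding sq_def by auto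
      hence "{a,b} \<in> Fv E v" using 5 by (intro S_notinc) auto
      from FvP[OF this] obtain p q where pq: "{a,b} = {p,q}" "{v,p} \<in> E" by blast
      have "p \<in> {a,b}" using pq(1) by simp
      hence "p = a \<or> p = b" by simp
      hence "{v,a} \<in> E \<or> {v,b} \<in> E" using pq(2) by blast
      thus ?thesis
      proof
        assume "{v,a} \<in> E" thus ?thesis using noV[OF g s 5] by blast
      next
        assume vb: "{v,b} \<in> E"
        have "v \<notin> {b,c,d,a}" using 5 by auto
        thus ?thesis using noV[OF g r1 _ vb] by blast
      qed
    qed
  qed
  show "\<forall>f\<in>Fv E v. \<exists>e\<in>incid E v. opposite (Sv_edges E v) e f"
  proof
    fix f assume "f \<in> Fv E v"
    from FvD[OF this] obtain u x w where c: "chordless_sq E v u x w" and n: "({v,u},{v,w}) \<notin> dvstar E v"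
      and f: "f = {u,x}" by blast
    have cs: "chordless_sq (Sv_edges E v) v w x u" using chordless_sq_rev[OF sqS[OF c n]] .
    have "{v,w} \<in> incid E v" using c unfolding chordless_sq_def sq_def incid_def
      by (auto simp: insert_commute)
    moreover have "opposite (Sv_edges E v) {v,w} f" unfolding opposite_def
      apply (rule exI[of _ v], rule exI[of _ w], rule exI[of _ x], rule exI[of _ u])
      using cs f by (auto simp: insert_commute)
    ultimately show "\<exists>e\<in>incid E v. opposite (Sv_edges E v) e f" by blast
  qed
  show "\<forall>x\<in>Sv_verts E v. x \<noteq> v \<and> {v, x} \<notin> E \<longrightarrow>
            (\<exists>u w. sq (Sv_edges E v) v u x w \<and>
                   {y. {v, y} \<in> E \<and> {x, y} \<in> E} = {u, w})"
  proof (intro ballI impI)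
    fix x assume xs: "x \<in> Sv_verts E v" and xv: "x \<noteq> v \<and> {v, x} \<notin> E"
    then obtain e where e: "e \<in> Sv_edges E v" "x \<in> e" unfolding Sv_verts_def by auto
    have "e \<notin> incid E v"
    proof
      assume ei: "e \<in> incid E v"
      hence "e \<in> E" "v \<in> e" by (auto simp: incid_def)
      then obtain p q where "e = {p,q}" using g unfolding graph_def by blast
      hence "e = {v,x}" using e \<open>v \<in> e\<close> xv by auto
      thus False using \<open>e \<in> E\<close> xv by simp
    qed
    hence "e \<in> Fv E v" using e by (auto simp: Sv_edges_def)
    from FvD[OF this] obtain u x' w where c: "chordless_sq E v u x' w" and n: "({v,u},{v,w}) \<notin> dvstar E v"
      and f: "e = {u,x'}" by blast
    have "{v,u} \<in> E" using c unfolding chordless_sq_def sq_def by auto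
    hence xx: "x = x'" using f e xv by auto
    have "sq (Sv_edges E v) v u x w" using sqS[OF c n] xx unfolding chordless_sq_def by auto
    moreover have "{y. {v, y} \<in> E \<and> {x, y} \<in> E} = {u, w}"
    proof
      show "{y. {v, y} \<in> E \<and> {x, y} \<in> E} \<subseteq> {u, w}" using keyL[OF g c n] xx by blast
      show "{u, w} \<subseteq> {y. {v, y} \<in> E \<and> {x, y} \<in> E}" using c xx
        unfolding chordless_sq_def sq_def by (auto simp: insert_commute)
    qed
    ultimately show "\<exists>u w. sq (Sv_edges E v) v u x w \<and>
                   {y. {v, y} \<in> E \<and> {x, y} \<in> E} = {u, w}" by blast
  qed
qed

end
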